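(* Let $E$ be a finite set and let $\mathcal{W}\subseteq\{+,-,0\}^E$ satisfy (A1), (A2), (A3). Let $U,U'\in\mathrm{asym}(\mathcal{W})$ with $\underline{U}=\underline{U'}$ and $I(U,-U')\cap\mathcal{W}=I(-U,U')\cap\mathcal{W}=\emptyset$, and let $P=U+(-U')$ (so $P\in\mathcal{P}(\mathcal{W})$). Then every $Z\in\mathcal{W}$ with $\underline{Z}\subseteq\underline{U}$ satisfies $Z_f=U_f$ for all $f\in\underline{U}\setminus\underline{P}$.
   Context: For $X\in\{+,-,0\}^E$: $X^+=\{e:X_e=+\}$, $X^-=\{e:X_e=-\}$, support $\underline{X}=X^+\cup X^-$; $(-X)_e=-X_e$; composition $(X\circ Y)_e=X_e$ if $X_e\neq0$, else $Y_e$; $S(X,Y)=(X^+\cap Y^-)\cup(X^-\cap Y^+)$. For sets, $\mathcal{A}\circ\mathcal{B}=\{A\circ B: A\in\mathcal{A}, B\in\mathcal{B}\}$. For $X,Y$ with $\underline{X}=\underline{Y}$, $X\neq Y$, $e\in S(X,Y)$: $I_e(X,Y)=\{V : \underline{V}\subseteq\underline{X}\setminus\{e\}, V_f=X_f\ \forall f\notin S(X,Y)\}$, $I(X,Y)=\bigcup_{e\in S(X,Y)}I_e(X,Y)$. Sum: $(X+Y)_e=0$ if $e\in S(X,Y)$, else $(X\circ Y)_e$. $\mathrm{sym}(\mathcal{W})=\{V: V,-V\in\mathcal{W}\}$, $\mathrm{asym}(\mathcal{W})=\{V\in\mathcal{W}: -V\notin\mathcal{W}\}$, $\mathcal{P}(\mathcal{W})=\{X+(-Y):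 X,Y\in\mathrm{asym}(\mathcal{W}), \underline{X}=\underline{Y}, I(X,-Y)\cap\mathcal{W}=I(-X,Y)\cap\mathcal{W}=\emptyset\}$. Axioms: (A1) $X,Y\in\mathcal{W}\Rightarrow X\circ Y\in\mathcal{W}$ and $X\circ(-Y)\in\mathcal{W}$; (A2) if $X,Y\in\mathcal{W}$ with $\underline{X}=\underline{Y}$ then $I_e(X,Y)\cap\mathcal{W}\neq\emptyset$ for every $e\in S(X,Y)$; (A3) $\mathcal{P}(\mathcal{W})\circ\mathcal{W}\subseteq\mathcal{W}$. *)

theory Defs
  imports Main
begin

datatype sign = Pos | Neg | Zero

type_synonym 'e svec = "'e \<Rightarrow> sign"

definition sneg :: "sign \<Rightarrow> sign" where
  "sneg s = (case s of Pos \<Rightarrow> Neg | Neg \<Rightarrow> Pos | Zero \<Rightarrow> Zero)"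

definition vneg :: "'e svec \<Rightarrow> 'e svec" where
  "vneg X = (\<lambda>e. sneg (X e))"

definition supp :: "'e svec \<Rightarrow> 'e set" where
  "supp X = {e. X e \<noteq> Zero}"

definition comp :: "'e svec \<Rightarrow> 'e svec \<Rightarrow> 'e svec" where
  "comp X Y = (\<lambda>e. if X e \<noteq> Zero then X e else Y e)"

definition sep :: "'e svec \<Rightarrow> 'e svec \<Rightarrow> 'e set" where
  "sep X Y = {e. (X e = Pos \<and> Y e = Neg) \<or> (X e = Neg \<and> Y e = Pos)}"

definition svecs :: "'e set \<Rightarrow> 'e svec set" where
  "svecs E = {X. \<forall>e. e \<notin> E \<longrightarrow> X e = Zero}"

definition Ie :: "'e set \<Rightarrow> 'e \<Rightarrow> 'e svec \<Rightarrow> 'e svec \<Rightarrow> 'e svec set" where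
  "Ie E e X Y = {V \<in> svecs E. supp V \<subseteq> supp X - {e} \<and> (\<forall>f. f \<notin> sep X Y \<longrightarrow> V f = X f)}"

definition Iset :: "'e set \<Rightarrow> 'e svec \<Rightarrow> 'e svec \<Rightarrow> 'e svec set" where
  "Iset E X Y = (\<Union>e\<in>sep X Y. Ie E e X Y)"

definition vsum :: "'e svec \<Rightarrow> 'e svec \<Rightarrow> 'e svec" where
  "vsum X Y = (\<lambda>e. if e \<in> sep X Y then Zero else comp X Y e)"

definition asym :: "'e svec set \<Rightarrow> 'e svec set" where
  "asym W = {V \<in> W. vneg V \<notin> W}"

definition Pset :: "'e set \<Rightarrow> 'e svec set \<Rightarrow> 'e svec set" where
  "Pset E W = {vsum X (vneg Y) | X Y. X \<in> asym W \<and> Y \<in> asym W \<and> supp X = supp Y \<and>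
      Iset E X (vneg Y) \<inter> W = {} \<and> Iset E (vneg X) Y \<inter> W = {}}"

definition A1 :: "'e svec set \<Rightarrow> bool" where
  "A1 W \<longleftrightarrow> (\<forall>X\<in>W. \<forall>Y\<in>W. comp X Y \<in> W \<and> comp X (vneg Y) \<in> W)"

definition A2 :: "'e set \<Rightarrow> 'e svec set \<Rightarrow> bool" where
  "A2 E W \<longleftrightarrow> (\<forall>X\<in>W. \<forall>Y\<in>W. supp X = supp Y \<longrightarrow>
      (\<forall>e\<in>sep X Y. Ie E e X Y \<inter> W \<noteq> {}))"

definition A3 :: "'e set \<Rightarrow> 'e svec set \<Rightarrow> bool" where
  "A3 E W \<longleftrightarrow> (\<forall>P\<in>Pset E W. \<forall>X\<in>W. comp P X \<in> W)"

end

theory Submission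
  imports Defs
begin

theorem lemma2p4:
  fixes E :: "'e set" and W :: "'e svec set" and U U' Z :: "'e svec"
  assumes "finite E"
    and "W \<subseteq> svecs E"
    and "A1 W" and "A2 E W" and "A3 E W"
    and "U \<in> asym W" and "U' \<in> asym W"
    and "supp U = supp U'"
    and "Iset E U (vneg U') \<inter> W = {}" and "Iset E (vneg U) U' \<inter> W = {}"
    and "Z \<in> W" and "supp Z \<subseteq> supp U"
  shows "\<forall>f \<in> supp U - supp (vsum U (vneg U')). Z f = U f"
proof
  fix f assume f: "f \<in> supp U - supp (vsum U (vneg U'))"
  define S where "S = sep U (vneg U')"
  define P where "P = vsum U (vneg U')"
  have fS: "f \<in> S" using f unfolding S_def supp_def vsum_def comp_def by (auto split: if_splits)
  have "P \<in> Pset E W" unfolding P_def Pset_def using assms(6-10) by blast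
  then have VW: "comp P Z \<in> W" using assms(5,11) unfolding A3_def by blast
  define V where "V = comp P Z"
  have Ueq: "U' x = Zero" if "U x = Zero" for x
    using assms(8) that unfolding supp_def by auto
  have Zeq: "Z x = Zero" if "U x = Zero" for x
    using assms(12) that unfolding supp_def by auto
  have Vx: "V x = (if x \<in> S then Z x else U x)" for x
    using Ueq[of x] Zeq[of x]
    unfolding V_def P_def S_def vsum_def comp_def sep_def vneg_def sneg_def
    by (cases "U x"; cases "U' x"; auto)
  have VsvE: "V \<in> svecs E" using VW assms(2) V_def by auto
  show "Z f = U f"
  proof (rule ccontr)
    assume ne: "Z f \<noteq> U f"
    show False
    proof (cases "\<exists>e\<in>S. Z e = Zero")
      case True
      then obtain e where e: "e \<in> S" "Z e = Zero" by blast
      have "V \<in> Ie E e U (vneg U')"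
        unfolding Ie_def
      proof (intro CollectI conjI allI impI VsvE)
        show "supp V \<subseteq> supp U - {e}"
        proof
          fix x assume "x \<in> supp V"
          then have "V x \<noteq> Zero" unfolding supp_def by auto
          then show "x \<in> supp U - {e}" using Vx[of x] Zeq[of x] e unfolding supp_def
            by (auto split: if_splits)
        qed
        fix x assume "x \<notin> sep U (vneg U')"
        then show "V x = U x" using Vx[of x] unfolding S_def by auto
      qed
      then have "V \<in> Iset E U (vneg U') \<inter> W" using e VW V_def unfolding Iset_def S_def by auto
      then show False using assms(9) by blast
    next
      case False
      then have Znz: "\<And>x. x \<in> S \<Longrightarrow> Z x \<noteq> Zero" by blast
      have Ufnz: "U f \<noteq> Zero" using f unfolding supp_def by auto
      have suppV: "supp U = supp V"
        unfolding supp_def using Vx Znz Zeq by (auto split: if_splits)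
      have fsep: "f \<in> sep U V"
        using Vx[of f] fS ne Znz[OF fS] Ufnz unfolding sep_def
        by (cases "U f"; cases "Z f"; auto)
      have UW: "U \<in> W" using assms(6) unfolding asym_def by auto
      obtain Y where Y: "Y \<in> Ie E f U V" "Y \<in> W"
        using assms(4) UW VW V_def suppV fsep unfolding A2_def by blast
      have "Y \<in> Ie E f U (vneg U')"
        using Y(1) unfolding Ie_def
      proof (auto)
        fix x assume h: "\<forall>g. g \<notin> sep U V \<longrightarrow> Y g = U g" "x \<notin> sep U (vneg U')"
        then have "x \<notin> sep U V" using Vx[of x] unfolding S_def sep_def by auto
        then show "Y x = U x" using h by auto
      qed
      then have "Y \<in> Iset E U (vneg U') \<inter> W" using fS Y unfolding Iset_def S_def by auto
      then show False using assms(9) by blast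
    qed
  qed
qed

end
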